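(* Let $\mathbb{H}=\{z\in\mathbb{C}:\operatorname{Im}z>0\}$. For $z_1,z_2\in\mathbb{H}$ and $p\ge1$ let \[ U_p(z_1,z_2)=\frac{|z_1-z_2|}{\sqrt[p]{\alpha^p+\beta^p}},\quad \alpha=\sqrt{\operatorname{Im}(z_1)^2+c^2},\quad \beta=\sqrt{\operatorname{Im}(z_2)^2+c^2},\quad c=\frac{|\operatorname{Re}(z_1-z_2)|}{2}. \] Then $b_{\mathbb{H},p}(z_1,z_2)\ge U_p(z_1,z_2)$.
   Context: For $z_1,z_2\in\mathbb{H}$ and $p\ge1$, $b_{\mathbb{H},p}(z_1,z_2)=\sup_{t\in\mathbb{R}}\frac{|z_1-z_2|}{\sqrt[p]{|z_1-t|^p+|t-z_2|^p}}$. *)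

theory Defs
  imports "HOL-Analysis.Analysis"
begin

definition upper_half_plane :: "complex set" where
  "upper_half_plane = {z. Im z > 0}"

definition b_H :: "real \<Rightarrow> complex \<Rightarrow> complex \<Rightarrow> real" where
  "b_H p z1 z2 = (SUP t::real. cmod (z1 - z2) /
      ((cmod (z1 - of_real t) powr p + cmod (of_real t - z2) powr p) powr (1 / p)))"

definition U_p :: "real \<Rightarrow> complex \<Rightarrow> complex \<Rightarrow> real" where
  "U_p p z1 z2 =
     (let c = \<bar>Re (z1 - z2)\<bar> / 2;
          \<alpha> = sqrt ((Im z1)\<^sup>2 + c\<^sup>2);
          \<beta> = sqrt ((Im z2)\<^sup>2 + c\<^sup>2)
      in cmod (z1 - z2) / ((\<alpha> powr p + \<beta> powr p) powr (1 / p)))"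

end

theory Submission
  imports Defs
begin

lemma term_bound:
  fixes z1 z2 :: complex and p t :: real
  assumes "Im z1 > 0" "p \<ge> 1"
  shows "cmod (z1 - z2) /
      ((cmod (z1 - of_real t) powr p + cmod (of_real t - z2) powr p) powr (1 / p)) \<le> cmod (z1 - z2) / Im z1"
proof -
  let ?a = "cmod (z1 - of_real t)" and ?b = "cmod (of_real t - z2)"
  have a1: "Im z1 \<le> ?a" using abs_Im_le_cmod[of "z1 - of_real t"] by simp
  have "?a powr p \<le> ?a powr p + ?b powr p" by simp
  hence "(?a powr p) powr (1/p) \<le> (?a powr p + ?b powr p) powr (1/p)"
    using assms by (intro powr_mono2) auto
  moreover have "(?a powr p) powr (1/p) = ?a" using assms by (simp add: powr_powr)
  ultimately have "Im z1 \<le> (?a powr p + ?b powr p) powr (1/p)" using a1 by linarith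
  hence "0 < (?a powr p + ?b powr p) powr (1/p)" using assms by linarith
  thus ?thesis using assms \<open>Im z1 \<le> (?a powr p + ?b powr p) powr (1/p)\<close>
    by (intro divide_left_mono) (auto intro: mult_pos_pos)
qed

theorem theorem3p23:
  fixes z1 z2 :: complex and p :: real
  assumes "z1 \<in> upper_half_plane" and "z2 \<in> upper_half_plane" and "p \<ge> 1"
  shows "b_H p z1 z2 \<ge> U_p p z1 z2"
proof -
  have i1: "Im z1 > 0" using assms(1) by (simp add: upper_half_plane_def)
  define t where "t = (Re z1 + Re z2) / 2"
  define c where "c = \<bar>Re (z1 - z2)\<bar> / 2"
  have ha: "cmod (z1 - of_real t) = sqrt ((Im z1)\<^sup>2 + c\<^sup>2)"
    unfolding cmod_def t_def c_def by (simp add: power2_eq_square algebra_simps abs_mult_self_eq field_simps)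
  have hb: "cmod (of_real t - z2) = sqrt ((Im z2)\<^sup>2 + c\<^sup>2)"
    unfolding cmod_def t_def c_def by (simp add: power2_eq_square algebra_simps abs_mult_self_eq)
  have "U_p p z1 z2 = cmod (z1 - z2) /
      ((cmod (z1 - of_real t) powr p + cmod (of_real t - z2) powr p) powr (1 / p))"
    unfolding U_p_def Let_def ha hb c_def by simp
  also have "\<dots> \<le> b_H p z1 z2"
    unfolding b_H_def
    by (rule cSUP_upper[where f = "\<lambda>t. cmod (z1 - z2) /
      ((cmod (z1 - of_real t) powr p + cmod (of_real t - z2) powr p) powr (1 / p))"])
       (auto intro!: bdd_aboveI2 term_bound i1 assms(3))
  finally show ?thesis .
qed

end
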